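(* Consider $N$ advertisers, advertiser $i$ having click-through rate $c_i\in(0,1]$, abandonment probability $\gamma_i\ge 0$ with $\mu_i=c_i+\gamma_i\le 1$, and private value per click $v_i\ge 0$; index them so that $\frac{c_1v_1}{\mu_1}\ge\frac{c_2v_2}{\mu_2}\ge\dots\ge\frac{c_Nv_N}{\mu_N}$. Define bids recursively from the bottom by $b_{N+1}=0$ (so the term $\frac{b_{N+1}c_{N+1}}{\mu_{N+1}}$ is $0$) and $$b_i=\frac{\mu_i}{c_i}\Big[v_ic_i+(1-\mu_i)\frac{b_{i+1}c_{i+1}}{\mu_{i+1}}\Big],\qquad i=N,\dots,1.$$ Then, in the CE mechanism, this bid profile is an envy-free pure-strategy Nash equilibrium: no advertiser can increase its expected payoff by unilaterally changing its bid (in particular by moving to any other position). Moreover, at this equilibrium the resulting ranking is socially optimal (it maximizes the total expected value $\sum_{\text{positions }k} v_{(k)}\,c_{(k)}\prod_{l<k}(1-\mu_{(l)})$ over all orderings of the advertisers) and is also optimal for the search engine for the resulting per-click prices (it maximizes $\sum_k p_{(k)}c_{(k)}\prod_{l<k}(1-\mu_{(l)})$ over all orderings with these prices).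
   Context: Click model: users view ads top to bottom; having viewed the ad at position $k$ the user clicks it with probability $c$ of that ad, abandons with probability $\gamma$ of that ad, and otherwise moves on. Thus if ads are placed in order $(1),\dots,(N)$, the ad at position $k$ is clicked with probability $c_{(k)}\prod_{l<k}(1-\mu_{(l)})$. CE mechanism: given bids $b$, with $w=c/\mu$, ads are ranked in descending order of $wb$, and the ad at position $i$ pays per click $p_i=\frac{w_{i+1}b_{i+1}}{w_i}=\frac{b_{i+1}c_{i+1}\mu_i}{\mu_{i+1}c_i}$, where $i+1$ denotes the ad immediately below it (the bottom ad pays $0$). An advertiser's expected payoff is $(v-p)$ times its click probability; the search engine's expected profit is the sum over ads of price per click times click probability. *)

theory Defs
  imports Complex_Main "HOL-Library.Product_Lexorder"
begin

text \<open>Advertisers are indexed 0,...,N-1. c = click-through rates, mu = c + gamma.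
  An ordering (ranking) is a list of advertisers; position k holds ord ! k.\<close>

definition is_ordering :: "nat \<Rightarrow> nat list \<Rightarrow> bool" where
  "is_ordering N ord \<longleftrightarrow> distinct ord \<and> set ord = {..<N}"

definition ce_weight :: "(nat \<Rightarrow> real) \<Rightarrow> (nat \<Rightarrow> real) \<Rightarrow> nat \<Rightarrow> real" where
  "ce_weight c mu i = c i / mu i"

definition score :: "(nat \<Rightarrow> real) \<Rightarrow> (nat \<Rightarrow> real) \<Rightarrow> (nat \<Rightarrow> real) \<Rightarrow> nat \<Rightarrow> real" where
  "score c mu b i = ce_weight c mu i * b i"

definition ce_rank :: "(nat \<Rightarrow> real) \<Rightarrow> (nat \<Rightarrow> real) \<Rightarrow> (nat \<Rightarrow> real) \<Rightarrow> nat \<Rightarrow> nat list" where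
  "ce_rank c mu b N = sort_key (\<lambda>i. (- score c mu b i, i)) [0..<N]"

definition click_prob :: "(nat \<Rightarrow> real) \<Rightarrow> (nat \<Rightarrow> real) \<Rightarrow> nat list \<Rightarrow> nat \<Rightarrow> real" where
  "click_prob c mu ord k = c (ord ! k) * (\<Prod>l<k. 1 - mu (ord ! l))"

definition pos_price :: "(nat \<Rightarrow> real) \<Rightarrow> (nat \<Rightarrow> real) \<Rightarrow> (nat \<Rightarrow> real) \<Rightarrow> nat list \<Rightarrow> nat \<Rightarrow> real" where
  "pos_price c mu b ord k =
     (if Suc k < length ord then score c mu b (ord ! Suc k) / ce_weight c mu (ord ! k) else 0)"

definition adv_payoff :: "(nat \<Rightarrow> real) \<Rightarrow> (nat \<Rightarrow> real) \<Rightarrow> (nat \<Rightarrow> real) \<Rightarrow> (nat \<Rightarrow> real)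
    \<Rightarrow> nat list \<Rightarrow> nat \<Rightarrow> real" where
  "adv_payoff c mu v b ord i =
     (\<Sum>k<length ord. if ord ! k = i then (v i - pos_price c mu b ord k) * click_prob c mu ord k else 0)"

definition ce_payoff :: "(nat \<Rightarrow> real) \<Rightarrow> (nat \<Rightarrow> real) \<Rightarrow> (nat \<Rightarrow> real) \<Rightarrow> (nat \<Rightarrow> real)
    \<Rightarrow> nat \<Rightarrow> nat \<Rightarrow> real" where
  "ce_payoff c mu v b N i = adv_payoff c mu v b (ce_rank c mu b N) i"

definition ce_price_of :: "(nat \<Rightarrow> real) \<Rightarrow> (nat \<Rightarrow> real) \<Rightarrow> (nat \<Rightarrow> real) \<Rightarrow> nat \<Rightarrow> nat \<Rightarrow> real" where
  "ce_price_of c mu b N i =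
     (\<Sum>k<N. if ce_rank c mu b N ! k = i then pos_price c mu b (ce_rank c mu b N) k else 0)"

definition move_to :: "nat list \<Rightarrow> nat \<Rightarrow> nat \<Rightarrow> nat list" where
  "move_to ord i k = (let others = filter (\<lambda>l. l \<noteq> i) ord in take k others @ [i] @ drop k others)"

definition welfare :: "(nat \<Rightarrow> real) \<Rightarrow> (nat \<Rightarrow> real) \<Rightarrow> (nat \<Rightarrow> real) \<Rightarrow> nat list \<Rightarrow> real" where
  "welfare c mu v ord = (\<Sum>k<length ord. v (ord ! k) * click_prob c mu ord k)"

definition se_profit :: "(nat \<Rightarrow> real) \<Rightarrow> (nat \<Rightarrow> real) \<Rightarrow> (nat \<Rightarrow> real) \<Rightarrow> nat list \<Rightarrow> real" where
  "se_profit c mu p ord = (\<Sum>k<length ord. p (ord ! k) * click_prob c mu ord k)"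

end

theory Submission imports Defs begin

lemma welfare_Cons:
  "welfare c mu u (x#xs) = u x * c x + (1 - mu x) * welfare c mu u xs"
proof -
  have p: "\<And>k. (\<Prod>l<Suc k. 1 - mu ((x#xs)!l)) = (1 - mu x) * (\<Prod>l<k. 1 - mu (xs!l))"
    by (simp add: prod.lessThan_Suc_shift del: prod.lessThan_Suc)
  show ?thesis
    unfolding welfare_def click_prob_def
    by (simp add: sum.lessThan_Suc_shift p sum_distrib_left algebra_simps del: sum.lessThan_Suc prod.lessThan_Suc)
qed

lemma welfare_swap:
  assumes "mu y * (c x * u x) \<le> mu x * (c y * u y)"
  shows "welfare c mu u (x#y#zs) \<le> welfare c mu u (y#x#zs)"
proof -
  have "welfare c mu u (y#x#zs) - welfare c mu u (x#y#zs) = mu x * (c y * u y) - mu y * (c x * u x)"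
    by (simp add: welfare_Cons algebra_simps)
  then show ?thesis using assms by linarith
qed

lemma welfare_insort:
  assumes mu1: "\<forall>j<N. mu j \<le> 1"
    and cross: "\<forall>a b. a \<le> b \<longrightarrow> b < N \<longrightarrow> mu a * (c b * u b) \<le> mu b * (c a * u a)"
  shows "sorted ys \<Longrightarrow> set ys \<subseteq> {..<N} \<Longrightarrow> x < N \<Longrightarrow>
     welfare c mu u (x#ys) \<le> welfare c mu u (insort x ys)"
proof (induction ys)
  case Nil then show ?case by simp
next
  case (Cons y ys)
  show ?case
  proof (cases "x \<le> y")
    case True then show ?thesis by simp
  next
    case False
    have y: "y < N" using Cons.prems by auto
    have "welfare c mu u (x#y#ys) \<le> welfare c mu u (y#x#ys)"
      by (rule welfare_swap) (use cross False Cons.prems in auto)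
    also have "\<dots> = u y * c y + (1 - mu y) * welfare c mu u (x#ys)" by (simp add: welfare_Cons)
    also have "\<dots> \<le> u y * c y + (1 - mu y) * welfare c mu u (insort x ys)"
      using Cons.IH Cons.prems mu1 y by (intro add_left_mono mult_left_mono) auto
    also have "\<dots> = welfare c mu u (insort x (y#ys))" using False by (simp add: welfare_Cons)
    finally show ?thesis .
  qed
qed

lemma welfare_opt:
  assumes mu1: "\<forall>j<N. mu j \<le> 1"
    and cross: "\<forall>a b. a \<le> b \<longrightarrow> b < N \<longrightarrow> mu a * (c b * u b) \<le> mu b * (c a * u a)"
  shows "distinct \<sigma> \<Longrightarrow> set \<sigma> \<subseteq> {..<N} \<Longrightarrow>
     welfare c mu u \<sigma> \<le> welfare c mu u (sorted_list_of_set (set \<sigma>))"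
proof (induction \<sigma>)
  case Nil then show ?case by simp
next
  case (Cons x xs)
  have x: "x < N" "x \<notin> set xs" using Cons.prems by auto
  have "welfare c mu u (x#xs) = u x * c x + (1 - mu x) * welfare c mu u xs" by (simp add: welfare_Cons)
  also have "\<dots> \<le> u x * c x + (1 - mu x) * welfare c mu u (sorted_list_of_set (set xs))"
    using Cons x mu1 by (intro add_left_mono mult_left_mono) auto
  also have "\<dots> = welfare c mu u (x # sorted_list_of_set (set xs))" by (simp add: welfare_Cons)
  also have "\<dots> \<le> welfare c mu u (insort x (sorted_list_of_set (set xs)))"
    by (rule welfare_insort[OF mu1 cross]) (use Cons.prems x in auto)
  also have "\<dots> = welfare c mu u (sorted_list_of_set (set (x#xs)))"
    using x by (simp add: sorted_list_of_set_insert)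
  finally show ?case .
qed

lemma move_to_self:
  assumes "distinct L" "k < length L" "L!k = i"
  shows "move_to L i k = L"
proof -
  let ?A = "take k L" and ?B = "drop (Suc k) L"
  have L: "L = ?A @ i # ?B" using id_take_nth_drop[OF assms(2)] assms(3) by simp
  have "distinct (?A @ i # ?B)" using assms(1) by (simp only: L[symmetric])
  then have ni: "i \<notin> set ?A" "i \<notin> set ?B" by auto
  have f: "filter (\<lambda>l. l \<noteq> i) L = ?A @ ?B"
  proof -
    have "filter (\<lambda>l. l \<noteq> i) ?A = ?A" using ni(1) by (intro filter_True) auto
    moreover have "filter (\<lambda>l. l \<noteq> i) ?B = ?B" using ni(2) by (intro filter_True) auto
    ultimately show ?thesis by (subst L) simp
  qed
  have len: "length ?A = k" using assms by simp
  show ?thesis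
    by (subst (2) L) (use assms(2) in \<open>simp add: move_to_def Let_def f len min_def\<close>)
qed

lemma adv_payoff_upd:
  assumes "distinct L"
  shows "adv_payoff c mu v (b(j := x)) L j = adv_payoff c mu v b L j"
  unfolding adv_payoff_def
proof (rule sum.cong[OF refl])
  fix q assume q: "q \<in> {..<length L}"
  show "(if L ! q = j then (v j - pos_price c mu (b(j := x)) L q) * click_prob c mu L q else 0) =
        (if L ! q = j then (v j - pos_price c mu b L q) * click_prob c mu L q else 0)"
  proof (cases "L!q = j")
    case True
    have "Suc q < length L \<Longrightarrow> L ! Suc q \<noteq> j"
      using True q assms nth_eq_iff_index_eq[of L q "Suc q"] by auto
    then have "pos_price c mu (b(j := x)) L q = pos_price c mu b L q"
      by (simp add: pos_price_def score_def)
    then show ?thesis by simp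
  qed simp
qed


locale ce =
  fixes N :: nat and c mu v b :: "nat \<Rightarrow> real"
  assumes cpos: "\<And>i. i<N \<Longrightarrow> 0 < c i"
    and c_le_mu: "\<And>i. i<N \<Longrightarrow> c i \<le> mu i"
    and mu_le: "\<And>i. i<N \<Longrightarrow> mu i \<le> 1"
    and val: "\<And>i. i<N \<Longrightarrow> 0 \<le> v i"
    and srt: "\<And>i. Suc i < N \<Longrightarrow> c (Suc i) * v (Suc i) / mu (Suc i) \<le> c i * v i / mu i"
    and bids: "\<And>i. i<N \<Longrightarrow> b i = mu i / c i *
        (v i * c i + (1 - mu i) * (if Suc i < N then b (Suc i) * c (Suc i) / mu (Suc i) else 0))"
begin

definition S where "S j = (if j < N then score c mu b j else 0)"
definition r where "r j = c j * v j / mu j"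

lemma mupos: "i<N \<Longrightarrow> 0 < mu i" using cpos c_le_mu by force

lemma mu_r: "j<N \<Longrightarrow> mu j * r j = c j * v j"
  using mupos[of j] by (simp add: r_def)

lemma S_rec: "j<N \<Longrightarrow> S j = c j * v j + (1 - mu j) * S (Suc j)"
proof -
  assume j: "j<N"
  have h: "(if Suc j < N then b (Suc j) * c (Suc j) / mu (Suc j) else 0) = S (Suc j)"
    by (simp add: S_def score_def ce_weight_def)
  have "S j = c j / mu j * b j" using j by (simp add: S_def score_def ce_weight_def)
  also have "\<dots> = v j * c j + (1 - mu j) * S (Suc j)"
    using bids[OF j] cpos[OF j] mupos[OF j] h by simp
  finally show ?thesis by (simp add: mult.commute)
qed

lemma S_nonneg: "0 \<le> S j"
proof (induction "N - j" arbitrary: j)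
  case 0 then show ?case by (simp add: S_def)
next
  case (Suc m)
  then have j: "j < N" by simp
  have "0 \<le> S (Suc j)" using Suc.hyps(1)[of "Suc j"] Suc.hyps(2) by simp
  then show ?case using S_rec[OF j] cpos[OF j] val[OF j] mu_le[OF j]
    by (simp add: add_nonneg_nonneg mult_nonneg_nonneg)
qed

lemma r_mono: "i \<le> j \<Longrightarrow> j < N \<Longrightarrow> r j \<le> r i"
proof (induction j)
  case 0 then show ?case by simp
next
  case (Suc j)
  show ?case
  proof (cases "i = Suc j")
    case False
    then have "i \<le> j" using Suc.prems by simp
    then show ?thesis using Suc srt[of j] by (force simp: r_def)
  qed simp
qed

lemma r_nonneg: "j < N \<Longrightarrow> 0 \<le> r j"
  using cpos[of j] val[of j] mupos[of j] by (simp add: r_def)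

lemma S_le_r: "j < N \<Longrightarrow> S (Suc j) \<le> r j"
proof (induction "N - j" arbitrary: j)
  case 0 then show ?case by simp
next
  case (Suc m)
  show ?case
  proof (cases "Suc j < N")
    case True
    have "S (Suc j) = c (Suc j) * v (Suc j) + (1 - mu (Suc j)) * S (Suc (Suc j))" by (rule S_rec[OF True])
    also have "\<dots> \<le> mu (Suc j) * r (Suc j) + (1 - mu (Suc j)) * r (Suc j)"
      using Suc.hyps(1)[of "Suc j"] Suc.hyps(2) True mu_r[OF True] mu_le[OF True]
      by (intro add_mono mult_left_mono) auto
    also have "\<dots> = r (Suc j)" by (simp add: algebra_simps)
    also have "\<dots> \<le> r j" using r_mono True by simp
    finally show ?thesis .
  next
    case False
    then show ?thesis using r_nonneg Suc.prems by (simp add: S_def)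
  qed
qed

lemma S_dec: "S (Suc j) \<le> S j"
proof (cases "j < N")
  case True
  have "mu j * S (Suc j) \<le> mu j * r j" using S_le_r[OF True] mupos[OF True] by simp
  then show ?thesis using S_rec[OF True] mu_r[OF True] mu_le[OF True] S_nonneg[of "Suc j"]
    by (simp add: algebra_simps)
next
  case False then show ?thesis by (simp add: S_def)
qed

lemma S_anti: "i \<le> j \<Longrightarrow> S j \<le> S i"
proof (induction j)
  case 0 then show ?case by simp
next
  case (Suc j)
  show ?case
  proof (cases "i = Suc j")
    case False
    then show ?thesis using Suc S_dec[of j] by simp
  qed simp
qed

lemma cross: "i < N \<Longrightarrow> k < N \<Longrightarrow> r i \<le> r k \<Longrightarrow> mu k * (c i * v i) \<le> mu i * (c k * v k)"
proof -
  assume a: "i < N" "k < N" "r i \<le> r k"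
  have "mu k * (c i * v i) = mu k * mu i * r i" using mu_r[OF a(1)] by simp
  also have "\<dots> \<le> mu k * mu i * r k" using a mupos[of i] mupos[of k] by simp
  also have "\<dots> = mu i * (c k * v k)" using mu_r[OF a(2)] by simp
  finally show ?thesis .
qed

lemma rank: "ce_rank c mu b N = [0..<N]"
proof -
  have "sorted (map (\<lambda>i. (- score c mu b i, i)) [0..<N])"
  proof (subst sorted_iff_nth_mono, intro allI impI)
    fix p q assume pq: "p \<le> q" "q < length (map (\<lambda>i. (- score c mu b i, i)) [0..<N])"
    then have "S q \<le> S p" by (intro S_anti)
    then show "map (\<lambda>i. (- score c mu b i, i)) [0..<N] ! p \<le> map (\<lambda>i. (- score c mu b i, i)) [0..<N] ! q"
      using pq by (auto simp: S_def less_eq_prod_def)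
  qed
  then show ?thesis unfolding ce_rank_def by (rule sort_key_id_if_sorted)
qed


definition nxt where "nxt i l = (if l < i then l else Suc l)"
definition Q where "Q i k = (\<Prod>l<k. 1 - mu (nxt i l))"
definition h where "h i k = (c i * v i - mu i * S (nxt i k)) * Q i k"

lemma others: "i < N \<Longrightarrow> filter (\<lambda>l. l \<noteq> i) [0..<N] = [0..<i] @ [Suc i..<N]"
proof -
  assume i: "i < N"
  have "[0..<N] = [0..<i] @ [i..<N]" using i
    by (metis le_add_diff_inverse less_imp_le upt_add_eq_append zero_le)
  also have "[i..<N] = i # [Suc i..<N]" using i by (simp add: upt_conv_Cons)
  finally have e: "[0..<N] = [0..<i] @ i # [Suc i..<N]" .
  have a: "filter (\<lambda>l. l \<noteq> i) [0..<i] = [0..<i]" by (intro filter_True) auto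
  have b: "filter (\<lambda>l. l \<noteq> i) [Suc i..<N] = [Suc i..<N]" by (intro filter_True) auto
  show ?thesis by (subst e) (simp add: a b)
qed

lemma others_nth: "i < N \<Longrightarrow> l < N - 1 \<Longrightarrow> ([0..<i] @ [Suc i..<N]) ! l = nxt i l"
  by (auto simp: nth_append nxt_def)

lemma nth_ins: "k \<le> length xs \<Longrightarrow> q \<le> length xs \<Longrightarrow>
  (take k xs @ i # drop k xs) ! q = (if q < k then xs!q else if q = k then i else xs!(q-1))"
proof -
  assume a: "k \<le> length xs" "q \<le> length xs"
  have lt: "length (take k xs) = k" using a by simp
  show ?thesis
  proof (cases "q < k")
    case True then show ?thesis using lt by (simp add: nth_append)
  next
    case False
    then have "(take k xs @ i # drop k xs) ! q = (i # drop k xs) ! (q - k)" using lt by (simp add: nth_append)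
    moreover have "q > k \<Longrightarrow> (i # drop k xs) ! (q - k) = xs ! (q - 1)"
    proof -
      assume "q > k"
      then have "q - k = Suc (q - 1 - k)" "k + (q - 1 - k) = q - 1" by auto
      then show ?thesis using a by simp
    qed
    ultimately show ?thesis using False by auto
  qed
qed

lemma move_eq: "i < N \<Longrightarrow> move_to [0..<N] i k = take k ([0..<i] @ [Suc i..<N]) @ i # drop k ([0..<i] @ [Suc i..<N])"
  by (simp add: move_to_def Let_def others)

lemma move_len: "i < N \<Longrightarrow> k < N \<Longrightarrow> length (move_to [0..<N] i k) = N"
proof -
  assume a: "i < N" "k < N"
  have "length (take k ([0..<i] @ [Suc i..<N]) @ i # drop k ([0..<i] @ [Suc i..<N])) = length ([0..<i] @ [Suc i..<N]) + 1"
    using a by simp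
  then show ?thesis using a by (simp only: move_eq) simp
qed

lemma move_nth: "i < N \<Longrightarrow> k < N \<Longrightarrow> q < N \<Longrightarrow>
   move_to [0..<N] i k ! q = (if q < k then nxt i q else if q = k then i else nxt i (q - 1))"
proof -
  assume a: "i < N" "k < N" "q < N"
  let ?O = "[0..<i] @ [Suc i..<N]"
  have lo: "length ?O = N - 1" using a by simp
  have "move_to [0..<N] i k ! q = (if q < k then ?O!q else if q = k then i else ?O!(q-1))"
    unfolding move_eq[OF a(1)] by (rule nth_ins) (use a lo in auto)
  then show ?thesis using a others_nth[of i q] others_nth[of i "q-1"] by auto
qed

lemma nxt_ne: "nxt i l \<noteq> i" by (simp add: nxt_def)

lemma Q_nonneg: "k < N \<Longrightarrow> 0 \<le> Q i k"
  unfolding Q_def by (rule prod_nonneg) (use mu_le in \<open>auto simp: nxt_def\<close>)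

lemma payoff_move: "i < N \<Longrightarrow> k < N \<Longrightarrow> adv_payoff c mu v b (move_to [0..<N] i k) i = h i k"
proof -
  assume a: "i < N" "k < N"
  let ?M = "move_to [0..<N] i k"
  have len: "length ?M = N" using move_len a .
  have eq: "\<And>q. q < N \<Longrightarrow> (?M ! q = i) = (q = k)"
    using move_nth a nxt_ne by auto
  have "adv_payoff c mu v b ?M i =
      (\<Sum>q<N. if q = k then (v i - pos_price c mu b ?M q) * click_prob c mu ?M q else 0)"
    unfolding adv_payoff_def len by (rule sum.cong) (auto simp: eq)
  also have "\<dots> = (v i - pos_price c mu b ?M k) * click_prob c mu ?M k" using a by simp
  also have "click_prob c mu ?M k = c i * Q i k"
    unfolding click_prob_def Q_def using a move_nth by (auto intro!: prod.cong)
  also have "(v i - pos_price c mu b ?M k) * (c i * Q i k) = h i k"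
  proof (cases "Suc k < N")
    case True
    have "?M ! k = i" using move_nth[OF a a(2)] by simp
    have "?M ! Suc k = nxt i k" using move_nth[OF a True] by simp
    moreover have "nxt i k < N" using True by (simp add: nxt_def)
    ultimately have "pos_price c mu b ?M k = S (nxt i k) / (c i / mu i)"
      using True a \<open>?M ! k = i\<close> by (simp add: pos_price_def len S_def ce_weight_def)
    then show ?thesis using cpos[OF a(1)] mupos[OF a(1)] unfolding h_def
      by (simp add: field_simps)
  next
    case False
    then have "nxt i k = Suc k" "\<not> Suc k < N" using a by (auto simp: nxt_def)
    then show ?thesis using False unfolding h_def by (simp add: pos_price_def len S_def algebra_simps)
  qed
  finally show ?thesis .
qed

lemma move_id: "i < N \<Longrightarrow> move_to [0..<N] i i = [0..<N]"
  by (rule move_to_self) auto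

lemma h_up: "i < N \<Longrightarrow> Suc k \<le> i \<Longrightarrow> h i k \<le> h i (Suc k)"
proof -
  assume a: "i < N" "Suc k \<le> i"
  have k: "k < N" using a by simp
  have nk: "nxt i k = k" using a by (simp add: nxt_def)
  have Qs: "Q i (Suc k) = Q i k * (1 - mu k)" by (simp add: Q_def nk)
  have Qn: "0 \<le> Q i k" "0 \<le> Q i (Suc k)" using Q_nonneg a by auto
  have "nxt i (Suc k) \<ge> Suc k" by (simp add: nxt_def)
  then have "S (nxt i (Suc k)) \<le> S (Suc k)" by (rule S_anti)
  then have "mu i * S (nxt i (Suc k)) \<le> mu i * S (Suc k)" using mupos[OF a(1)] by simp
  then have h2: "(c i * v i - mu i * S (Suc k)) * Q i (Suc k) \<le> h i (Suc k)"
    unfolding h_def using Qn by (intro mult_right_mono) auto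
  have cr: "mu k * (c i * v i) \<le> mu i * (c k * v k)" using cross[OF a(1) k] r_mono[of k i] a by simp
  have "h i (Suc k) - h i k \<ge> (c i * v i - mu i * S (Suc k)) * Q i (Suc k) - h i k" using h2 by simp
  moreover have "(c i * v i - mu i * S (Suc k)) * Q i (Suc k) - h i k = Q i k * (mu i * (c k * v k) - mu k * (c i * v i))"
    unfolding h_def nk Qs S_rec[OF k] by (simp add: algebra_simps)
  moreover have "0 \<le> Q i k * (mu i * (c k * v k) - mu k * (c i * v i))" using Qn cr by simp
  ultimately show ?thesis by linarith
qed

lemma h_down: "i \<le> k \<Longrightarrow> Suc k < N \<Longrightarrow> h i (Suc k) \<le> h i k"
proof -
  assume a: "i \<le> k" "Suc k < N"
  have i: "i < N" "k < N" using a by auto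
  have nk: "nxt i k = Suc k" "nxt i (Suc k) = Suc (Suc k)" using a by (auto simp: nxt_def)
  have Qs: "Q i (Suc k) = Q i k * (1 - mu (Suc k))" by (simp add: Q_def nk)
  have Qn: "0 \<le> Q i k" using Q_nonneg i by auto
  have cr: "mu i * (c (Suc k) * v (Suc k)) \<le> mu (Suc k) * (c i * v i)"
    using cross[OF a(2) i(1)] r_mono[of i "Suc k"] a by simp
  have "h i k - h i (Suc k) = Q i k * (mu (Suc k) * (c i * v i) - mu i * (c (Suc k) * v (Suc k)))"
    unfolding h_def nk Qs S_rec[OF a(2)] by (simp add: algebra_simps)
  moreover have "0 \<le> Q i k * (mu (Suc k) * (c i * v i) - mu i * (c (Suc k) * v (Suc k)))" using Qn cr by simp
  ultimately show ?thesis by linarith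
qed

lemma h_le_up: "i < N \<Longrightarrow> k \<le> i \<Longrightarrow> h i k \<le> h i i"
proof (induction "i - k" arbitrary: k)
  case 0 then show ?case by simp
next
  case (Suc m)
  then have "h i k \<le> h i (Suc k)" by (intro h_up) auto
  also have "\<dots> \<le> h i i" using Suc.hyps(1)[of "Suc k"] Suc.hyps(2) Suc.prems by simp
  finally show ?case .
qed

lemma h_le_down: "i \<le> k \<Longrightarrow> k < N \<Longrightarrow> h i k \<le> h i i"
proof (induction k)
  case 0 then show ?case by simp
next
  case (Suc k)
  show ?case
  proof (cases "i = Suc k")
    case False
    then have "i \<le> k" using Suc.prems by simp
    then have "h i (Suc k) \<le> h i k" using h_down Suc.prems by simp
    also have "\<dots> \<le> h i i" using Suc.IH \<open>i \<le> k\<close> Suc.prems by simp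
    finally show ?thesis .
  qed simp
qed

lemma part2: "i < N \<Longrightarrow> k < N \<Longrightarrow> adv_payoff c mu v b (move_to (ce_rank c mu b N) i k) i \<le> ce_payoff c mu v b N i"
proof -
  assume a: "i < N" "k < N"
  have "adv_payoff c mu v b (move_to (ce_rank c mu b N) i k) i = h i k" using payoff_move a by (simp add: rank)
  also have "\<dots> \<le> h i i" using h_le_up h_le_down a by (cases "k \<le> i") auto
  also have "\<dots> = ce_payoff c mu v b N i"
    using payoff_move[OF a(1) a(1)] move_id[OF a(1)] by (simp add: ce_payoff_def rank)
  finally show ?thesis .
qed


lemma sorted_f: "sorted (map (\<lambda>i. (- score c mu b i, i)) [0..<N])"
proof (subst sorted_iff_nth_mono, intro allI impI)
  fix p q assume pq: "p \<le> q" "q < length (map (\<lambda>i. (- score c mu b i, i)) [0..<N])"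
  then have "S q \<le> S p" by (intro S_anti)
  then show "map (\<lambda>i. (- score c mu b i, i)) [0..<N] ! p \<le> map (\<lambda>i. (- score c mu b i, i)) [0..<N] ! q"
    using pq by (auto simp: S_def less_eq_prod_def)
qed

lemma part1: "i < N \<Longrightarrow> ce_payoff c mu v (b(i := b')) N i \<le> ce_payoff c mu v b N i"
proof -
  assume i: "i < N"
  define f' where "f' = (\<lambda>j. (- score c mu (b(i := b')) j, j))"
  define L where "L = sort_key f' [0..<N]"
  have Lr: "ce_rank c mu (b(i := b')) N = L" by (simp add: L_def f'_def ce_rank_def)
  have dL: "distinct L" and sL: "set L = {..<N}" and lL: "length L = N" by (auto simp: L_def)
  have "map f' (filter (\<lambda>l. l \<noteq> i) [0..<N]) = map (\<lambda>i. (- score c mu b i, i)) (filter (\<lambda>l. l \<noteq> i) [0..<N])"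
    by (auto simp: f'_def score_def)
  moreover have "sorted (map (\<lambda>i. (- score c mu b i, i)) (filter (\<lambda>l. l \<noteq> i) [0..<N]))"
    using sorted_f by (rule sorted_filter)
  ultimately have "sorted (map f' (filter (\<lambda>l. l \<noteq> i) [0..<N]))" by (simp only:)
  then have fL: "filter (\<lambda>l. l \<noteq> i) L = filter (\<lambda>l. l \<noteq> i) [0..<N]"
    unfolding L_def filter_sort by (rule sort_key_id_if_sorted)
  obtain k where k: "k < N" "L ! k = i" using i sL lL by (metis in_set_conv_nth lessThan_iff)
  have "L = move_to L i k" using move_to_self[OF dL] k lL by simp
  also have "\<dots> = move_to [0..<N] i k" by (simp add: move_to_def fL)
  finally have Lm: "L = move_to [0..<N] i k" .
  have "ce_payoff c mu v (b(i := b')) N i = adv_payoff c mu v b L i"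
    by (simp add: ce_payoff_def Lr adv_payoff_upd[OF dL])
  also have "\<dots> \<le> ce_payoff c mu v b N i" using part2[OF i k(1)] by (simp add: Lm rank)
  finally show ?thesis .
qed

lemma ordering_set: "is_ordering N \<sigma> \<Longrightarrow> sorted_list_of_set (set \<sigma>) = [0..<N]"
  by (simp add: is_ordering_def lessThan_atLeast0)

lemma part3: "is_ordering N \<sigma> \<Longrightarrow> welfare c mu v \<sigma> \<le> welfare c mu v (ce_rank c mu b N)"
proof -
  assume o: "is_ordering N \<sigma>"
  have "welfare c mu v \<sigma> \<le> welfare c mu v (sorted_list_of_set (set \<sigma>))"
  proof (rule welfare_opt)
    show "\<forall>j<N. mu j \<le> 1" using mu_le by auto
    show "\<forall>a ba. a \<le> ba \<longrightarrow> ba < N \<longrightarrow> mu a * (c ba * v ba) \<le> mu ba * (c a * v a)"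
      using cross r_mono by auto
  qed (use o in \<open>auto simp: is_ordering_def\<close>)
  then show ?thesis using o by (simp add: ordering_set rank)
qed

lemma price: "j < N \<Longrightarrow> c j * ce_price_of c mu b N j = mu j * S (Suc j)"
proof -
  assume j: "j < N"
  have "ce_price_of c mu b N j = (\<Sum>k<N. if k = j then pos_price c mu b [0..<N] k else 0)"
    unfolding ce_price_of_def rank by (rule sum.cong) auto
  also have "\<dots> = pos_price c mu b [0..<N] j" using j by simp
  finally have e: "ce_price_of c mu b N j = pos_price c mu b [0..<N] j" .
  show ?thesis using j cpos[OF j] mupos[OF j]
    by (auto simp: e pos_price_def S_def ce_weight_def field_simps)
qed

lemma part4: "is_ordering N \<sigma> \<Longrightarrow>
   se_profit c mu (ce_price_of c mu b N) \<sigma> \<le> se_profit c mu (ce_price_of c mu b N) (ce_rank c mu b N)"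
proof -
  assume o: "is_ordering N \<sigma>"
  let ?u = "ce_price_of c mu b N"
  have "welfare c mu ?u \<sigma> \<le> welfare c mu ?u (sorted_list_of_set (set \<sigma>))"
  proof (rule welfare_opt)
    show "\<forall>j<N. mu j \<le> 1" using mu_le by auto
    show "\<forall>a ba. a \<le> ba \<longrightarrow> ba < N \<longrightarrow> mu a * (c ba * ?u ba) \<le> mu ba * (c a * ?u a)"
    proof (intro allI impI)
      fix a ba assume ab: "a \<le> ba" "ba < N"
      have "S (Suc ba) \<le> S (Suc a)" using ab by (intro S_anti) simp
      then have "mu a * (mu ba * S (Suc ba)) \<le> mu ba * (mu a * S (Suc a))"
        using mupos[of a] mupos[of ba] ab by simp
      then show "mu a * (c ba * ?u ba) \<le> mu ba * (c a * ?u a)"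
        using price[of a] price[of ba] ab by simp
    qed
  qed (use o in \<open>auto simp: is_ordering_def\<close>)
  then show ?thesis using o by (simp add: ordering_set rank se_profit_def welfare_def)
qed

end

theorem theorem3:
  fixes N :: nat and c \<gamma> v b :: "nat \<Rightarrow> real"
  defines "mu \<equiv> (\<lambda>i. c i + \<gamma> i)"
  assumes ctr: "\<forall>i<N. 0 < c i \<and> c i \<le> 1"
    and gam: "\<forall>i<N. 0 \<le> \<gamma> i"
    and mu_le: "\<forall>i<N. mu i \<le> 1"
    and val: "\<forall>i<N. 0 \<le> v i"
    and sorted: "\<forall>i. Suc i < N \<longrightarrow> c (Suc i) * v (Suc i) / mu (Suc i) \<le> c i * v i / mu i"
    and bids: "\<forall>i<N. b i = mu i / c i *
        (v i * c i + (1 - mu i) * (if Suc i < N then b (Suc i) * c (Suc i) / mu (Suc i) else 0))"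
  shows "(\<forall>i<N. \<forall>b'\<ge>0. ce_payoff c mu v (b(i := b')) N i \<le> ce_payoff c mu v b N i)
       \<and> (\<forall>i<N. \<forall>k<N. adv_payoff c mu v b (move_to (ce_rank c mu b N) i k) i \<le> ce_payoff c mu v b N i)
       \<and> (\<forall>\<sigma>. is_ordering N \<sigma> \<longrightarrow> welfare c mu v \<sigma> \<le> welfare c mu v (ce_rank c mu b N))
       \<and> (\<forall>\<sigma>. is_ordering N \<sigma> \<longrightarrow>
            se_profit c mu (ce_price_of c mu b N) \<sigma> \<le> se_profit c mu (ce_price_of c mu b N) (ce_rank c mu b N))"
proof -
  interpret ce N c mu v b
  proof
    show "\<And>i. i < N \<Longrightarrow> 0 < c i" using ctr by auto
    show "\<And>i. i < N \<Longrightarrow> c i \<le> mu i" using gam by (simp add: mu_def)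
    show "\<And>i. i < N \<Longrightarrow> mu i \<le> 1" using mu_le by auto
    show "\<And>i. i < N \<Longrightarrow> 0 \<le> v i" using val by auto
    show "\<And>i. Suc i < N \<Longrightarrow> c (Suc i) * v (Suc i) / mu (Suc i) \<le> c i * v i / mu i" using sorted by auto
    show "\<And>i. i < N \<Longrightarrow> b i = mu i / c i *
        (v i * c i + (1 - mu i) * (if Suc i < N then b (Suc i) * c (Suc i) / mu (Suc i) else 0))"
      using bids by auto
  qed
  show ?thesis using part1 part2 part3 part4 by auto
qed

end
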